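(* For real $p\neq 0$, the inequality $2\left( \frac{\tanh x}{x}\right) ^{p}<\left( \frac{x}{\sinh x}\right) ^{4p}+1$ holds for all $x\in(0,\pi/2)$ if and only if $p<0$ or $p\geq 6/5$. *)

theory Defs
  imports Complex_Main
begin

end

theory Submission
  imports Defs "HOL-Analysis.Analysis"
begin

lemma nonneg_from_deriv:
  fixes f f' :: "real \<Rightarrow> real"
  assumes "0 \<le> x" "f 0 \<ge> 0"
    and "\<And>t. 0 \<le> t \<Longrightarrow> t \<le> x \<Longrightarrow> (f has_real_derivative f' t) (at t)"
    and "\<And>t. 0 \<le> t \<Longrightarrow> t \<le> x \<Longrightarrow> f' t \<ge> 0"
  shows "f x \<ge> 0"
proof -
  have "f 0 \<le> f x"
    using DERIV_nonneg_imp_nondecreasing[of 0 x f] assms by blast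
  thus ?thesis using assms(2) by linarith
qed

lemma tanh_le_x: fixes x :: real assumes "0 \<le> x" shows "tanh x \<le> x"
proof -
  have "(\<lambda>t. t - tanh t) x \<ge> 0"
  proof (rule nonneg_from_deriv[where f = "\<lambda>t. t - tanh t" and f' = "\<lambda>t. tanh t ^ 2"])
    fix t :: real
    show "((\<lambda>t. t - tanh t) has_real_derivative tanh t ^ 2) (at t)"
      by (auto intro!: derivative_eq_intros)
  qed (use assms in auto)
  thus ?thesis by simp
qed

lemma tanh_ge3: fixes x :: real assumes "0 \<le> x" shows "x - x^3/3 \<le> tanh x"
proof -
  have "(\<lambda>t. tanh t - (t - t^3/3)) x \<ge> 0"
  proof (rule nonneg_from_deriv[where f = "\<lambda>t. tanh t - (t - t^3/3)" and f' = "\<lambda>t. t^2 - tanh t ^ 2"])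
    fix t :: real
    show "((\<lambda>t. tanh t - (t - t^3/3)) has_real_derivative t^2 - tanh t ^ 2) (at t)"
      by (auto intro!: derivative_eq_intros simp: algebra_simps)
  next
    fix t :: real assume "0 \<le> t" "t \<le> x"
    thus "0 \<le> t^2 - tanh t ^ 2" using tanh_le_x[of t]
      by (simp add: power_mono)
  qed (use assms in auto)
  thus ?thesis by simp
qed

lemma tanh_le5: fixes x :: real assumes "0 \<le> x" "x^2 \<le> 3"
  shows "tanh x \<le> x - x^3/3 + 2*x^5/15"
proof -
  have "(\<lambda>t. x - x^3/3 + 2*x^5/15 - tanh x) x \<ge> 0"
  proof (rule nonneg_from_deriv[where f = "\<lambda>t. t - t^3/3 + 2*t^5/15 - tanh t" and f' = "\<lambda>t. tanh t ^ 2 - t^2 + 2*t^4/3"])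
    fix t :: real
    show "((\<lambda>t. t - t^3/3 + 2*t^5/15 - tanh t) has_real_derivative tanh t ^ 2 - t^2 + 2*t^4/3) (at t)"
      by (auto intro!: derivative_eq_intros simp: algebra_simps)
  next
    fix t :: real assume t: "0 \<le> t" "t \<le> x"
    have t2: "t^2 \<le> 3" using t assms power_mono[of t x 2] by linarith
    have a: "0 \<le> t - t^3/3"
    proof -
      have "t - t^3/3 = t * (1 - t^2/3)" by (simp add: algebra_simps power2_eq_square power3_eq_cube)
      thus ?thesis using t t2 by simp
    qed
    have "(t - t^3/3)^2 \<le> tanh t ^ 2" using tanh_ge3[of t] t a by (simp add: power_mono)
    moreover have "(t - t^3/3)^2 = t^2 - 2*t^4/3 + t^6/9" by (simp add: algebra_simps power2_eq_square eval_nat_numeral)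
    moreover have "t^6 \<ge> 0" by simp
    ultimately show "0 \<le> tanh t ^ 2 - t^2 + 2*t^4/3" by linarith
  qed (use assms in auto)
  thus ?thesis by simp
qed

lemma tanh_ge7: fixes x :: real assumes "0 \<le> x" "x^2 \<le> 3"
  shows "x - x^3/3 + 2*x^5/15 - 17*x^7/315 \<le> tanh x"
proof -
  have "(\<lambda>t. tanh t - (t - t^3/3 + 2*t^5/15 - 17*t^7/315)) x \<ge> 0"
  proof (rule nonneg_from_deriv[where f = "\<lambda>t. tanh t - (t - t^3/3 + 2*t^5/15 - 17*t^7/315)" and f' = "\<lambda>t. t^2 - 2*t^4/3 + 17*t^6/45 - tanh t ^ 2"])
    fix t :: real
    show "((\<lambda>t. tanh t - (t - t^3/3 + 2*t^5/15 - 17*t^7/315)) has_real_derivative t^2 - 2*t^4/3 + 17*t^6/45 - tanh t ^ 2) (at t)"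
      by (auto intro!: derivative_eq_intros simp: algebra_simps)
  next
    fix t :: real assume t: "0 \<le> t" "t \<le> x"
    have t2: "t^2 \<le> 3" using t assms power_mono[of t x 2] by linarith
    have "tanh t ^ 2 \<le> (t - t^3/3 + 2*t^5/15)^2"
      using tanh_le5[of t] t t2 by (simp add: power_mono)
    moreover have "(t - t^3/3 + 2*t^5/15)^2 = t^2 - 2*t^4/3 + 17*t^6/45 - 4*t^8/45 + 4*t^10/225"
      by (simp add: algebra_simps power2_eq_square eval_nat_numeral)
    moreover have "4*t^10/225 \<le> 4*t^8/45"
    proof -
      have "t^10 = t^8 * t^2" by (simp add: eval_nat_numeral)
      moreover have "t^8 * t^2 \<le> t^8 * 5" using t2 by (intro mult_left_mono) auto
      ultimately show ?thesis by simp
    qed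
    ultimately show "0 \<le> t^2 - 2*t^4/3 + 17*t^6/45 - tanh t ^ 2" by linarith
  qed (use assms in auto)
  thus ?thesis by simp
qed

lemma deriv_lncosh: "((\<lambda>t. ln (cosh t)) has_real_derivative tanh t) (at t)"
  by (auto intro!: derivative_eq_intros simp: tanh_def)

lemma lncosh_le2: fixes x :: real assumes "0 \<le> x" shows "ln (cosh x) \<le> x^2/2"
proof -
  have "(\<lambda>t. t^2/2 - ln (cosh t)) x \<ge> 0"
  proof (rule nonneg_from_deriv[where f = "\<lambda>t. t^2/2 - ln (cosh t)" and f' = "\<lambda>t. t - tanh t"])
    fix t :: real
    show "((\<lambda>t. t^2/2 - ln (cosh t)) has_real_derivative t - tanh t) (at t)"
      by (auto intro!: derivative_eq_intros simp: tanh_def)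
  qed (use assms tanh_le_x in auto)
  thus ?thesis by simp
qed

lemma lncosh_ge4: fixes x :: real assumes "0 \<le> x" shows "x^2/2 - x^4/12 \<le> ln (cosh x)"
proof -
  have "(\<lambda>t. ln (cosh t) - (t^2/2 - t^4/12)) x \<ge> 0"
  proof (rule nonneg_from_deriv[where f = "\<lambda>t. ln (cosh t) - (t^2/2 - t^4/12)" and f' = "\<lambda>t. tanh t - (t - t^3/3)"])
    fix t :: real
    show "((\<lambda>t. ln (cosh t) - (t^2/2 - t^4/12)) has_real_derivative tanh t - (t - t^3/3)) (at t)"
      by (auto intro!: derivative_eq_intros simp: tanh_def)
  qed (use assms tanh_ge3 in auto)
  thus ?thesis by simp
qed

lemma lncosh_le6: fixes x :: real assumes "0 \<le> x" "x^2 \<le> 3"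
  shows "ln (cosh x) \<le> x^2/2 - x^4/12 + x^6/45"
proof -
  have "(\<lambda>t. t^2/2 - t^4/12 + t^6/45 - ln (cosh t)) x \<ge> 0"
  proof (rule nonneg_from_deriv[where f = "\<lambda>t. t^2/2 - t^4/12 + t^6/45 - ln (cosh t)" and f' = "\<lambda>t. t - t^3/3 + 2*t^5/15 - tanh t"])
    fix t :: real
    show "((\<lambda>t. t^2/2 - t^4/12 + t^6/45 - ln (cosh t)) has_real_derivative t - t^3/3 + 2*t^5/15 - tanh t) (at t)"
      by (auto intro!: derivative_eq_intros simp: tanh_def)
  next
    fix t :: real assume t: "0 \<le> t" "t \<le> x"
    have t2: "t^2 \<le> 3" using t assms power_mono[of t x 2] by linarith
    show "0 \<le> t - t^3/3 + 2*t^5/15 - tanh t" using tanh_le5[of t] t t2 by simp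
  qed (use assms in auto)
  thus ?thesis by simp
qed

lemma sinh_ge_x: fixes x :: real assumes "0 \<le> x" shows "x \<le> sinh x"
proof -
  have "(\<lambda>t. sinh t - t) x \<ge> 0"
  proof (rule nonneg_from_deriv[where f = "\<lambda>t. sinh t - t" and f' = "\<lambda>t. cosh t - 1"])
    fix t :: real
    show "((\<lambda>t. sinh t - t) has_real_derivative cosh t - 1) (at t)"
      by (auto intro!: derivative_eq_intros)
  qed (use assms cosh_real_ge_1 in auto)
  thus ?thesis by simp
qed

definition Lf :: "real \<Rightarrow> real" where "Lf x = ln (sinh x / x)"

lemma Lf_rec: fixes x :: real assumes "0 < x" shows "Lf x = Lf (x/2) + ln (cosh (x/2))"
proof -
  have "sinh x = 2 * sinh (x/2) * cosh (x/2)" using sinh_double[of "x/2"] by simp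
  hence eq: "sinh x / x = (sinh (x/2) / (x/2)) * cosh (x/2)" using assms by (simp add: field_simps)
  have pos: "sinh (x/2) / (x/2) > 0" using assms by simp
  have "ln (sinh x / x) = ln ((sinh (x/2) / (x/2)) * cosh (x/2))" by (subst eq) (rule refl)
  also have "\<dots> = ln (sinh (x/2) / (x/2)) + ln (cosh (x/2))" using ln_mult[of "sinh (x/2) / (x/2)" "cosh (x/2)"] pos by simp
  finally show ?thesis unfolding Lf_def .
qed

lemma Lf_nonneg: fixes x :: real assumes "0 < x" shows "0 \<le> Lf x"
  using sinh_ge_x[of x] assms unfolding Lf_def by simp

lemma Lf_le_lncosh: fixes x :: real assumes "0 < x" shows "Lf x \<le> ln (cosh x)"
proof -
  have "tanh x \<le> x" using tanh_le_x assms by simp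
  hence "sinh x \<le> x * cosh x" unfolding tanh_def using assms cosh_real_pos[of x]
    by (simp add: divide_le_eq mult.commute)
  hence "sinh x / x \<le> cosh x" using assms by (simp add: divide_le_eq mult.commute)
  moreover have "0 < sinh x / x" using assms by simp
  ultimately show ?thesis unfolding Lf_def by simp
qed

lemma halving_nonneg:
  fixes g :: "real \<Rightarrow> real" and x c :: real
  assumes "0 < x" "0 \<le> c"
    and step: "\<And>w. 0 < w \<Longrightarrow> w \<le> x \<Longrightarrow> g (w/2) \<le> g w"
    and tail: "\<And>n::nat. - c / 4^n \<le> g (x / 2^n)"
  shows "0 \<le> g x"
proof -
  have mono: "g (x / 2^n) \<le> g x" for n :: nat
  proof (induction n)
    case 0 then show ?case by simp
  next
    case (Suc n)
    have "0 < x / 2^n" using assms by simp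
    moreover have "x / 2^n \<le> x" using assms by (simp add: divide_le_eq)
    ultimately have "g ((x / 2^n)/2) \<le> g (x/2^n)" by (rule step)
    thus ?case using Suc by (simp add: field_simps)
  qed
  show ?thesis
  proof (rule ccontr)
    assume neg: "\<not> 0 \<le> g x"
    define a where "a = - g x"
    have a: "0 < a" using neg a_def by simp
    obtain n :: nat where n: "c / a < 4^n" using real_arch_pow[of 4 "c / a"] by auto
    have "c < 4^n * a" using n a by (simp add: divide_less_eq)
    hence "c / 4^n < a" by (simp add: divide_less_eq mult.commute)
    hence "- g x > c / 4^n" using a_def by simp
    thus False using mono[of n] tail[of n] by linarith
  qed
qed

lemma four_pow: "(4::real)^n = 2^n * 2^n"
  by (simp add: power_mult_distrib[symmetric])

lemma sq_half_pow: "((x::real) / 2^n)^2 = x^2 / 4^n"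
  by (simp add: four_pow power2_eq_square)

definition Uf :: "real \<Rightarrow> real" where "Uf w = w^2/6 - w^4/180 + w^6/2835"
definition Wf :: "real \<Rightarrow> real" where "Wf w = w^2/6 - w^4/180"

lemma Lf_le_U: fixes x :: real assumes "0 < x" "x^2 \<le> 12" shows "Lf x \<le> Uf x"
proof -
  have "0 \<le> (\<lambda>w. Uf w - Lf w) x"
  proof (rule halving_nonneg[where g = "\<lambda>w. Uf w - Lf w" and c = "x^2/2"])
    fix w :: real assume w: "0 < w" "w \<le> x"
    have "w^2 \<le> x^2" using w power_mono[of w x 2] by simp
    hence h: "(w/2)^2 \<le> 3" using assms by (simp add: power_divide)
    have "ln (cosh (w/2)) \<le> (w/2)^2/2 - (w/2)^4/12 + (w/2)^6/45"
      using lncosh_le6[of "w/2"] w h by simp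
    moreover have "Uf w - Uf (w/2) = (w/2)^2/2 - (w/2)^4/12 + (w/2)^6/45"
      unfolding Uf_def by (simp add: field_simps eval_nat_numeral)
    ultimately show "Uf (w/2) - Lf (w/2) \<le> Uf w - Lf w" using Lf_rec[OF w(1)] by linarith
  next
    fix n :: nat
    define v where "v = x / 2^n"
    have v: "0 < v" using assms v_def by simp
    have v2: "v^2 = x^2/4^n" using v_def sq_half_pow by simp
    have "v^2 \<le> x^2" using v2 assms by (simp add: divide_le_eq)
    hence v212: "v^2 \<le> 12" using assms by simp
    have "v^4 = v^2 * v^2" by (simp add: eval_nat_numeral)
    also have "\<dots> \<le> 12 * v^2" using v212 by (intro mult_right_mono) auto
    finally have v4: "v^4 \<le> 12 * v^2" .
    have v6: "0 \<le> v^6" by simp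
    have U0: "0 \<le> Uf v" unfolding Uf_def using v4 v6 zero_le_power2[of v] by linarith
    have "Lf v \<le> v^2/2" using Lf_le_lncosh[OF v] lncosh_le2[of v] v by simp
    hence "- (v^2/2) \<le> Uf v - Lf v" using U0 by simp
    thus "- (x^2/2) / 4^n \<le> Uf (x / 2^n) - Lf (x / 2^n)" using v2 v_def by simp
  qed (use assms in auto)
  thus ?thesis by simp
qed

lemma Lf_ge_W: fixes x :: real assumes "0 < x" shows "Wf x \<le> Lf x"
proof -
  have "0 \<le> (\<lambda>w. Lf w - Wf w) x"
  proof (rule halving_nonneg[where g = "\<lambda>w. Lf w - Wf w" and c = "x^2/6"])
    fix w :: real assume w: "0 < w" "w \<le> x"
    have "(w/2)^2/2 - (w/2)^4/12 \<le> ln (cosh (w/2))"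
      using lncosh_ge4[of "w/2"] w by simp
    moreover have "Wf w - Wf (w/2) = (w/2)^2/2 - (w/2)^4/12"
      unfolding Wf_def by (simp add: field_simps eval_nat_numeral)
    ultimately show "Lf (w/2) - Wf (w/2) \<le> Lf w - Wf w" using Lf_rec[OF w(1)] by linarith
  next
    fix n :: nat
    define v where "v = x / 2^n"
    have v: "0 < v" using assms v_def by simp
    have v2: "v^2 = x^2/4^n" using v_def sq_half_pow by simp
    have v4: "0 \<le> v^4" by simp
    have "- (v^2/6) \<le> Lf v - Wf v" using Lf_nonneg[OF v] v4 unfolding Wf_def by linarith
    thus "- (x^2/6) / 4^n \<le> Lf (x / 2^n) - Wf (x / 2^n)" using v2 v_def by simp
  qed (use assms in auto)
  thus ?thesis by simp
qed

lemma artanh_bound: fixes r :: real assumes "0 \<le> r" "r < 1"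
  shows "2 * (r + r^3/3) \<le> ln (1 + r) - ln (1 - r)"
proof -
  have "0 \<le> (\<lambda>t. ln (1 + t) - ln (1 - t) - 2 * (t + t^3/3)) r"
  proof (rule nonneg_from_deriv[where f = "\<lambda>t. ln (1 + t) - ln (1 - t) - 2 * (t + t^3/3)"
        and f' = "\<lambda>t. 1/(1+t) + 1/(1-t) - 2 * (1 + t^2)"])
    fix t :: real assume t: "0 \<le> t" "t \<le> r"
    hence t1: "t < 1" using assms by simp
    show "((\<lambda>t. ln (1 + t) - ln (1 - t) - 2 * (t + t^3/3)) has_real_derivative 1/(1+t) + 1/(1-t) - 2 * (1 + t^2)) (at t)"
      using t t1 by (auto intro!: derivative_eq_intros simp: divide_simps) (simp add: algebra_simps)
    have "1/(1+t) + 1/(1-t) = 2 / (1 - t^2)" using t t1 by (simp add: field_simps power2_eq_square)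
    moreover have "2 * (1 + t^2) \<le> 2 / (1 - t^2)"
    proof -
      have p: "0 < 1 - t^2" using t t1 by (simp add: power_less_one_iff abs_square_less_1)
      have "2 * (1 + t^2) * (1 - t^2) = 2 - 2 * t^4" by (simp add: algebra_simps eval_nat_numeral)
      moreover have "0 \<le> t^4" by simp
      ultimately have "2 * (1 + t^2) * (1 - t^2) \<le> 2" by linarith
      thus ?thesis using p by (simp add: le_divide_eq)
    qed
    ultimately show "0 \<le> 1/(1+t) + 1/(1-t) - 2 * (1 + t^2)" by simp
  qed (use assms in auto)
  thus ?thesis by simp
qed

lemma cosh_half: fixes x :: real
  shows "cosh x = (1 + tanh (x/2)^2) / (1 - tanh (x/2)^2)"
proof -
  define c s where "c = cosh (x/2)" and "s = sinh (x/2)"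
  have cx: "cosh x = c^2 + s^2" using cosh_double[of "x/2"] c_def s_def by simp
  have py: "c^2 - s^2 = 1" using hyperbolic_pythagoras[of "x/2"] c_def s_def by simp
  have c0: "c \<noteq> 0" using c_def by simp
  have t: "tanh (x/2) = s/c" by (simp add: tanh_def c_def s_def)
  have "1 - (s/c)^2 = (c^2 - s^2)/c^2" using c0 by (simp add: field_simps power_divide)
  also have "\<dots> = 1/c^2" using py by simp
  finally have d: "1 - (s/c)^2 = 1/c^2" .
  have "(1 + (s/c)^2) / (1 - (s/c)^2) = (1 + (s/c)^2) * c^2" using d by simp
  also have "\<dots> = c^2 + s^2" using c0 by (simp add: field_simps power_divide)
  finally show ?thesis using cx t by simp
qed

lemma lncosh_ge_rho: fixes x :: real
  shows "2 * (tanh (x/2)^2 + (tanh (x/2)^2)^3/3) \<le> ln (cosh x)"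
proof -
  define r where "r = tanh (x/2)^2"
  have r0: "0 \<le> r" using r_def by simp
  have r1: "r < 1" unfolding r_def using tanh_real_lt_1[of "x/2"] tanh_real_gt_neg1[of "x/2"]
    by (simp add: abs_square_less_1)
  have "ln (cosh x) = ln ((1 + r) / (1 - r))" using cosh_half[of x] r_def by simp
  also have "\<dots> = ln (1 + r) - ln (1 - r)" using r0 r1 by (simp add: ln_div)
  finally show ?thesis using artanh_bound[OF r0 r1] r_def by simp
qed

lemma poly_main: fixes x :: real assumes "0 < x" "x^2 \<le> 987/400"
  shows "3*Uf x - 12/5 * (Uf x)^2 + 288/125 * (x^2/6)^4 < 2*((x/2 - (x/2)^3/3 + 2*(x/2)^5/15 - 17*(x/2)^7/315)^2 + ((x/2)^2 - 2*(x/2)^4/3)^3/3)"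
proof -
  define d where "d = 987/400 - x^2"
  have d0: "0 \<le> d" using assms d_def by simp
  have id: "2*((x/2 - (x/2)^3/3 + 2*(x/2)^5/15 - 17*(x/2)^7/315)^2 + ((x/2)^2 - 2*(x/2)^4/3)^3/3) - (3*Uf x - 12/5 * (Uf x)^2 + 288/125 * (x^2/6)^4)
     = x^6 * (4818542728345127/2972712960000000000 + 8164508102939/1857945600000000 * d + 196059847/344064000000 * d^2 + 112905479/2194698240000 * d^3 + 289/812851200 * d^4)"
    unfolding d_def Uf_def by (simp add: field_simps eval_nat_numeral)
  have "0 < 4818542728345127/2972712960000000000 + 8164508102939/1857945600000000 * d + 196059847/344064000000 * d^2 + 112905479/2194698240000 * d^3 + (289/812851200 :: real) * d^4"
    using d0 by (intro add_pos_nonneg mult_nonneg_nonneg) auto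
  moreover have "0 < x^6" using assms by simp
  ultimately show ?thesis using id by (metis diff_gt_0_iff_gt mult_pos_pos)
qed
lemma x2_bound: fixes x :: real assumes "0 < x" "x < pi/2" shows "x^2 \<le> 987/400"
proof -
  have "x \<le> 3.1415926535899/2" using assms pi_approx(2) by simp
  hence "x^2 \<le> (3.1415926535899/2)^2" using assms by (intro power_mono) auto
  moreover have "(3.1415926535899/2)^2 \<le> (987/400::real)" by (simp add: power2_eq_square)
  ultimately show ?thesis by linarith
qed

lemma lin1: fixes r r3 l a b L4 Y A B :: real
  shows "2*(r + r3/3) \<le> l \<Longrightarrow> a \<le> b \<Longrightarrow> L4 \<le> Y \<Longrightarrow> b + 288/125*Y < 2*(A + B/3)
    \<Longrightarrow> A \<le> r \<Longrightarrow> B \<le> r3 \<Longrightarrow> a + 288/125*L4 < l"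
  by (simp add: field_simps)

lemma lin2: fixes L L2 L4 l ph :: real
  shows "3*L - 12/5*L2 + 288/125*L4 < l \<Longrightarrow> 72/25 * L2 - 20736/7500 * L4 \<le> ph \<Longrightarrow> 6/5 * (3 * L - l) < ph"
  by (simp add: field_simps)

lemma mainB: fixes x :: real assumes x: "0 < x" "x < pi/2"
  shows "6/5 * (3 * Lf x - ln (cosh x)) < ln (cosh (2 * (6/5) * Lf x))"
proof -
  have y: "x^2 \<le> 987/400" using x2_bound[OF x] .
  define L where "L = Lf x"
  define U where "U = Uf x"
  define z where "z = x/2"
  define \<rho> where "\<rho> = tanh z ^ 2"
  have L0: "0 \<le> L" using Lf_nonneg[OF x(1)] L_def by simp
  have LU: "L \<le> U" using Lf_le_U[OF x(1)] y L_def U_def by simp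
  have U6: "U \<le> x^2/6"
  proof -
    have "x^6/2835 \<le> x^4/180"
    proof -
      have "x^6 = x^4 * x^2" by (simp add: eval_nat_numeral)
      also have "\<dots> \<le> x^4 * 3" using y by (intro mult_left_mono) auto
      finally have "x^6 \<le> x^4 * 3" .
      moreover have "0 \<le> x^4" by simp
      ultimately show ?thesis by linarith
    qed
    thus ?thesis unfolding U_def Uf_def by simp
  qed
  have z0: "0 \<le> z" using x z_def by simp
  have zsq: "z^2 = x^2/4" unfolding z_def by (simp add: power_divide)
  have z2: "z^2 \<le> 3" using y zsq by simp
  have t7: "z - z^3/3 + 2*z^5/15 - 17*z^7/315 \<le> tanh z" using tanh_ge7[OF z0 z2] .
  have t7pos: "0 \<le> z - z^3/3 + 2*z^5/15 - 17*z^7/315"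
  proof -
    have zz: "z^2 \<le> 1" using y zsq by simp
    have "z - z^3/3 + 2*z^5/15 - 17*z^7/315 = z * (1 - z^2/3 + 2*z^4/15 - 17*z^6/315)"
      by (simp add: algebra_simps eval_nat_numeral)
    moreover have "z^6 \<le> 1" using zz by (metis power_le_one zero_le_power2 power_mult[of z 2 3] numeral_times_numeral semiring_norm(14) semiring_norm(6) mult_2 power_one numeral_Bit0 numeral_One) 
    moreover have "0 \<le> z^4" by simp
    moreover have "0 \<le> 1 - z^2/3 + 2*z^4/15 - 17*z^6/315" using calculation(2,3) zz by linarith
    ultimately show ?thesis using z0 by simp
  qed
  have r7: "(z - z^3/3 + 2*z^5/15 - 17*z^7/315)^2 \<le> \<rho>"
    unfolding \<rho>_def using t7 t7pos by (intro power_mono) auto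
  have t3: "z - z^3/3 \<le> tanh z" using tanh_ge3[OF z0] .
  have t3pos: "0 \<le> z - z^3/3"
  proof -
    have "z - z^3/3 = z * (1 - z^2/3)" by (simp add: algebra_simps eval_nat_numeral)
    thus ?thesis using z0 z2 by simp
  qed
  have r3: "(z - z^3/3)^2 \<le> \<rho>" unfolding \<rho>_def using t3 t3pos by (intro power_mono) auto
  have "(z - z^3/3)^2 = z^2 - 2*z^4/3 + z^6/9" by (simp add: algebra_simps eval_nat_numeral)
  moreover have "0 \<le> z^6" using z0 by simp
  ultimately have r2: "z^2 - 2*z^4/3 \<le> \<rho>" using r3 by linarith
  have r2pos: "0 \<le> z^2 - 2*z^4/3"
  proof -
    have "z^2 - 2*z^4/3 = z^2 * (1 - 2*z^2/3)" by (simp add: algebra_simps eval_nat_numeral)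
    moreover have "z^2 \<le> 1" using y zsq by simp
    ultimately show ?thesis by simp
  qed
  have r33: "(z^2 - 2*z^4/3)^3 \<le> \<rho>^3" using r2 r2pos by (intro power_mono) auto
  have lc: "2 * (\<rho> + \<rho>^3/3) \<le> ln (cosh x)" using lncosh_ge_rho[of x] \<rho>_def z_def by simp
  have lc2: "(2*(6/5)*L)^2/2 - (2*(6/5)*L)^4/12 \<le> ln (cosh (2*(6/5)*L))"
    using lncosh_ge4[of "2*(6/5)*L"] L0 by simp
  have f: "3*L - 12/5*L^2 \<le> 3*U - 12/5*U^2"
  proof -
    have "(3*U - 12/5*U^2) - (3*L - 12/5*L^2) = (U - L) * (3 - 12/5*(U + L))"
      by (simp add: field_simps power2_eq_square)
    moreover have "U + L \<le> 5/4" using LU U6 y by simp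
    moreover have "0 \<le> (U - L) * (3 - 12/5*(U + L))" using LU \<open>U + L \<le> 5/4\<close> by (intro mult_nonneg_nonneg) auto
    ultimately show ?thesis by linarith
  qed
  have L4: "L^4 \<le> (x^2/6)^4" using L0 LU U6 by (intro power_mono) auto
  have P: "3*U - 12/5 * U^2 + 288/125 * (x^2/6)^4 < 2*((z - z^3/3 + 2*z^5/15 - 17*z^7/315)^2 + (z^2 - 2*z^4/3)^3/3)"
    unfolding U_def z_def by (rule poly_main[OF x(1) y])
  have e1: "(2*(6/5)*L)^2/2 = 72/25 * L^2" by (simp add: power2_eq_square)
  have e2: "(2*(6/5)*L)^4/12 = 20736/7500 * L^4" by (simp add: eval_nat_numeral field_simps)
  have "6/5 * (3 * L - ln (cosh x)) < ln (cosh (2 * (6/5) * L))"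
  proof -
    have s1: "3*L - 12/5*L^2 + 288/125*L^4 < ln (cosh x)" by (rule lin1[OF lc f L4 P r7 r33])
    have s2: "72/25 * L^2 - 20736/7500 * L^4 \<le> ln (cosh (2*(6/5)*L))" using lc2 e1 e2 by linarith
    show ?thesis by (rule lin2[OF s1 s2])
  qed
  thus ?thesis using L_def by simp
qed

lemma wtanh_ge: fixes w :: real assumes "0 \<le> w" shows "ln (cosh w) \<le> w * tanh w"
proof -
  have "0 \<le> (\<lambda>t. t * tanh t - ln (cosh t)) w"
  proof (rule nonneg_from_deriv[where f = "\<lambda>t. t * tanh t - ln (cosh t)" and f' = "\<lambda>t. t * (1 - tanh t ^ 2)"])
    fix t :: real
    have d1: "((\<lambda>t. t * tanh t) has_real_derivative (tanh t + t * (1 - tanh t ^ 2))) (at t)"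
      by (auto intro!: derivative_eq_intros)
    show "((\<lambda>t. t * tanh t - ln (cosh t)) has_real_derivative t * (1 - tanh t ^ 2)) (at t)"
      using DERIV_diff[OF d1 deriv_lncosh[of t]] by simp
  next
    fix t :: real assume "0 \<le> t"
    moreover have "tanh t ^ 2 \<le> 1" using tanh_real_lt_1[of t] tanh_real_gt_neg1[of t]
      by (simp add: abs_square_le_1)
    ultimately show "0 \<le> t * (1 - tanh t ^ 2)" by simp
  qed (use assms in auto)
  thus ?thesis by simp
qed

lemma lncosh_ratio_mono: fixes a b :: real assumes "0 < a" "a \<le> b"
  shows "ln (cosh a) / a \<le> ln (cosh b) / b"
proof (rule DERIV_nonneg_imp_nondecreasing[OF assms(2)])
  fix w :: real assume w: "a \<le> w" "w \<le> b"
  hence w0: "0 < w" using assms by simp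
  have "((\<lambda>t. ln (cosh t) / t) has_real_derivative (tanh w * w - ln (cosh w)) / w^2) (at w)"
    using w0 by (auto intro!: derivative_eq_intros simp: tanh_def field_simps power2_eq_square)
  moreover have "0 \<le> (tanh w * w - ln (cosh w)) / w^2"
    using wtanh_ge[of w] w0 by (simp add: mult.commute)
  ultimately show "\<exists>y. ((\<lambda>t. ln (cosh t) / t) has_real_derivative y) (at w) \<and> 0 \<le> y" by blast
qed

lemma EQ: fixes x p :: real assumes x: "0 < x"
  shows "(2 * (tanh x / x) powr p < (x / sinh x) powr (4 * p) + 1)
     \<longleftrightarrow> p * (3 * Lf x - ln (cosh x)) < ln (cosh (2 * p * Lf x))"
proof -
  define L where "L = Lf x"
  define l where "l = ln (cosh x)"
  have sp: "0 < sinh x / x" using x by simp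
  have tp: "0 < tanh x / x" using x by simp
  have "ln (tanh x / x) = ln ((sinh x / x) / cosh x)" by (simp add: tanh_def mult.commute)
  also have "\<dots> = ln (sinh x / x) - ln (cosh x)" by (rule ln_divide_pos[OF sp cosh_real_pos])
  finally have lt: "ln (tanh x / x) = L - l" unfolding L_def Lf_def l_def .
  have "ln (x / sinh x) = ln (inverse (sinh x / x))" by simp
  also have "\<dots> = - ln (sinh x / x)" by (rule ln_inverse)
  finally have ls: "ln (x / sinh x) = - L" unfolding L_def Lf_def .
  have A: "(tanh x / x) powr p = exp (p * (L - l))" using tp lt x by (simp add: powr_def mult.commute)
  have B: "(x / sinh x) powr (4 * p) = exp (- (4 * p * L))" using x ls by (simp add: powr_def mult.commute)
  have C: "exp (- (4 * p * L)) + 1 = 2 * exp (- (2 * p * L)) * cosh (2 * p * L)"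
    by (simp add: cosh_def field_simps exp_add[symmetric])
  have "(2 * (tanh x / x) powr p < (x / sinh x) powr (4 * p) + 1)
      \<longleftrightarrow> exp (p * (L - l)) < exp (- (2 * p * L)) * cosh (2 * p * L)"
    using A B C by simp
  also have "\<dots> \<longleftrightarrow> exp (p * (L - l)) * exp (2 * p * L) < cosh (2 * p * L)"
  proof -
    have "exp (- (2 * p * L)) * cosh (2 * p * L) * exp (2 * p * L) = cosh (2 * p * L)"
      by (simp add: exp_minus field_simps)
    thus ?thesis by (metis exp_gt_zero mult_less_cancel_right_pos)
  qed
  also have "exp (p * (L - l)) * exp (2 * p * L) = exp (p * (3 * L - l))"
    by (simp add: exp_add[symmetric] algebra_simps)
  also have "exp (p * (3 * L - l)) < cosh (2 * p * L) \<longleftrightarrow> p * (3 * L - l) < ln (cosh (2 * p * L))"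
    by (metis cosh_real_pos exp_less_cancel_iff exp_ln)
  finally show ?thesis unfolding L_def l_def .
qed

lemma D_nonneg: fixes x :: real assumes "0 < x" "x^2 \<le> 3" shows "ln (cosh x) \<le> 3 * Lf x"
proof -
  have a: "Wf x \<le> Lf x" using Lf_ge_W[OF assms(1)] .
  have b: "ln (cosh x) \<le> x^2/2 - x^4/12 + x^6/45" using lncosh_le6[of x] assms by simp
  have "x^6 = x^4 * x^2" by (simp add: eval_nat_numeral)
  also have "\<dots> \<le> x^4 * 3" using assms by (intro mult_left_mono) auto
  finally have "x^6 \<le> x^4 * 3" .
  thus ?thesis using a b unfolding Wf_def by simp
qed

lemma Lf_pos: fixes x :: real assumes "0 < x" "x^2 \<le> 3" shows "0 < Lf x"
proof -
  have "x^4 = x^2 * x^2" by (simp add: eval_nat_numeral)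
  also have "\<dots> \<le> x^2 * 3" using assms by (intro mult_left_mono) auto
  finally have "x^4 \<le> x^2 * 3" .
  moreover have "0 < x^2" using assms by simp
  ultimately have "0 < Wf x" unfolding Wf_def by linarith
  thus ?thesis using Lf_ge_W[OF assms(1)] by simp
qed

lemma lncosh_pos: fixes w :: real assumes "w \<noteq> 0" shows "0 < ln (cosh w)"
proof -
  have "1 < cosh w" using cosh_real_ge_1[of w] cosh_real_one_iff[of w] assms by (metis order_le_less)
  thus ?thesis by simp
qed

lemma necessity: fixes p :: real assumes "0 < p" "p < 6/5"
  shows "\<exists>x. 0 < x \<and> x < pi/2 \<and> \<not> (p * (3 * Lf x - ln (cosh x)) < ln (cosh (2 * p * Lf x)))"
proof -
  define y where "y = (3 - 5*p/2)/2"
  have y0: "0 < y" and y1: "y \<le> 3/2" using assms y_def by auto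
  define x where "x = sqrt y"
  have x0: "0 < x" using y0 x_def by simp
  have xy: "x^2 = y" using y0 x_def by simp
  have "x < pi/2"
  proof -
    have "x^2 < (3/2)^2" using xy y1 by (simp add: power2_eq_square)
    hence "x < 3/2" using power_less_imp_less_base[of x 2 "3/2"] by simp
    thus ?thesis using pi_gt3 by simp
  qed
  moreover
  have "ln (cosh (2 * p * Lf x)) \<le> p * (3 * Lf x - ln (cosh x))"
  proof -
    define L where "L = Lf x"
    have L0: "0 \<le> L" using Lf_nonneg[OF x0] L_def by simp
    have LU: "L \<le> Uf x" using Lf_le_U[OF x0] xy y1 L_def by simp
    have y4: "y^2 = x^4" using xy by (metis power_mult numeral_times_numeral semiring_norm(12) semiring_norm(13) mult_2)
    have y6: "y^3 = x^6" using xy by (metis power_mult numeral_times_numeral semiring_norm(12) semiring_norm(13) mult_2 semiring_norm(14) semiring_norm(5))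
    have U6: "Uf x \<le> y/6"
    proof -
      have "y^3 \<le> y^2 * 3"
      proof -
        have "y^3 = y^2 * y" by (simp add: eval_nat_numeral)
        also have "\<dots> \<le> y^2 * 3" using y1 by (intro mult_left_mono) auto
        finally show ?thesis .
      qed
      hence "x^6 \<le> x^4 * 3" using y4 y6 by simp
      moreover have "0 \<le> x^4" by simp
      ultimately show ?thesis unfolding Uf_def using xy by linarith
    qed
    have Lb: "L \<le> y/6" using LU U6 by simp
    have "ln (cosh (2 * p * L)) \<le> (2 * p * L)^2/2" using lncosh_le2[of "2*p*L"] L0 assms by simp
    also have "\<dots> = 2 * p^2 * L^2" by (simp add: power_mult_distrib)
    also have "\<dots> \<le> 2 * p^2 * (y/6)^2" using L0 Lb by (intro mult_left_mono power_mono) auto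
    finally have ph: "ln (cosh (2 * p * L)) \<le> p^2 * y^2 / 18" by (simp add: power_divide)
    have W: "y/6 - y^2/180 \<le> L" using Lf_ge_W[OF x0] xy y4 L_def unfolding Wf_def by simp
    have l6: "ln (cosh x) \<le> y/2 - y^2/12 + y^3/45" using lncosh_le6[of x] x0 xy y1 y4 y6 by simp
    have D: "y^2/15 - y^3/45 \<le> 3 * L - ln (cosh x)" using W l6 by simp
    have "p^2 * y^2 / 18 \<le> p * (y^2/15 - y^3/45)"
    proof -
      have "p * (y^2/15 - y^3/45) - p^2 * y^2 / 18 = p * y^2 * (1/15 - y/45 - p/18)"
        by (simp add: field_simps eval_nat_numeral)
      moreover have "0 \<le> 1/15 - y/45 - p/18" using y_def assms by simp
      ultimately show ?thesis using assms by (smt (verit) mult_nonneg_nonneg zero_le_power2)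
    qed
    also have "\<dots> \<le> p * (3 * L - ln (cosh x))" using D assms by (intro mult_left_mono) auto
    finally show ?thesis using ph L_def by simp
  qed
  ultimately show ?thesis using x0 by force
qed

theorem proposition4p14:
  fixes p :: real
  assumes "p \<noteq> 0"
  shows "(\<forall>x::real. 0 < x \<and> x < pi / 2 \<longrightarrow>
            2 * (tanh x / x) powr p < (x / sinh x) powr (4 * p) + 1)
         \<longleftrightarrow> (p < 0 \<or> p \<ge> 6 / 5)"
proof
  assume H: "\<forall>x::real. 0 < x \<and> x < pi / 2 \<longrightarrow>
            2 * (tanh x / x) powr p < (x / sinh x) powr (4 * p) + 1"
  show "p < 0 \<or> p \<ge> 6 / 5"
  proof (rule ccontr)
    assume "\<not> (p < 0 \<or> p \<ge> 6 / 5)"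
    hence "0 < p" "p < 6/5" using assms by auto
    then obtain x where x: "0 < x" "x < pi/2" "\<not> (p * (3 * Lf x - ln (cosh x)) < ln (cosh (2 * p * Lf x)))"
      using necessity by blast
    thus False using H EQ[OF x(1), of p] by auto
  qed
next
  assume P: "p < 0 \<or> p \<ge> 6 / 5"
  show "\<forall>x::real. 0 < x \<and> x < pi / 2 \<longrightarrow>
            2 * (tanh x / x) powr p < (x / sinh x) powr (4 * p) + 1"
  proof (intro allI impI)
    fix x :: real assume x: "0 < x \<and> x < pi / 2"
    have y: "x^2 \<le> 987/400" using x2_bound x by auto
    have y3: "x^2 \<le> 3" using y by simp
    have Lp: "0 < Lf x" using Lf_pos x y3 by auto
    have "p * (3 * Lf x - ln (cosh x)) < ln (cosh (2 * p * Lf x))"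
    proof (cases "p < 0")
      case True
      have "p * (3 * Lf x - ln (cosh x)) \<le> 0"
        using D_nonneg[of x] x y3 True by (intro mult_nonpos_nonneg) auto
      also have "0 < ln (cosh (2 * p * Lf x))" using True Lp by (intro lncosh_pos) auto
      finally show ?thesis .
    next
      case False
      hence p: "6/5 \<le> p" using P by simp
      define D where "D = 3 * Lf x - ln (cosh x)"
      define a where "a = 2 * (6/5) * Lf x"
      define b where "b = 2 * p * Lf x"
      have a0: "0 < a" using Lp a_def by simp
      have ab: "a \<le> b" unfolding a_def b_def using Lp p by (intro mult_right_mono) auto
      have m: "ln (cosh a) / a \<le> ln (cosh b) / b" by (rule lncosh_ratio_mono[OF a0 ab])
      have B: "6/5 * D < ln (cosh a)" using mainB[of x] x unfolding D_def a_def by simp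
      have "b = (p / (6/5)) * a" using a_def b_def by simp
      have "p * D = (p / (6/5)) * (6/5 * D)" by simp
      also have "\<dots> < (p / (6/5)) * ln (cosh a)" using B p by (intro mult_strict_left_mono) auto
      also have "\<dots> = b * (ln (cosh a) / a)" using a0 a_def b_def by (simp add: field_simps)
      also have "\<dots> \<le> b * (ln (cosh b) / b)" using m a0 ab by (intro mult_left_mono) auto
      also have "\<dots> = ln (cosh b)" using a0 ab by simp
      finally show ?thesis using D_def b_def by simp
    qed
    thus "2 * (tanh x / x) powr p < (x / sinh x) powr (4 * p) + 1" using EQ x by auto
  qed
qed

end
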